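(* Under the standing assumptions below, for any $0\le n<\infty$, $\mathbf v\in\mathsf P_n$ and ordinal $\kappa$, we have $\mathrm{val}(\mathbf v)>\kappa$ if and only if there exists $x\in\mathcal{X}_{n+1}$ such that $\mathrm{val}(\mathbf v,x,y)\ge\kappa$ for all $y\in\mathcal{Y}_{n+1}$.
   Context: Standing assumptions: $(\mathcal{X}_t)_{t\ge1}$ Polish, $(\mathcal{Y}_t)_{t\ge1}$ countable; game: in round $t$, $\mathrm{P_A}$ plays $x_t\in\mathcal{X}_t$ then $\mathrm{P_L}$ plays $y_t\in\mathcal{Y}_t$; $\mathrm{P_L}$ wins iff the play lies in $\mathsf{W}\subseteq\prod_{t\ge1}(\mathcal{X}_t\times\mathcal{Y}_t)$, where $\mathsf{W}$ is coanalytic and finitely decidable (every element of $\mathsf{W}$ has a finite prefix all of whose continuations lie in $\mathsf{W}$); $\mathrm{P_L}$ has a winning strategy. Definitions: $\mathsf{P}_n=\prod_{t=1}^n(\mathcal{X}_t\times\mathcal{Y}_t)$ ($\mathsf P_0=\{\varnothing\}$), $\mathsf{P}=\bigcup_{n\ge0}\mathsf{P}_n$. A position $\mathbf v\in\mathsf P_n$ is active if some continuation $\mathbf w\in\prod_{t>n}(\mathcal{X}_t\times\mathcal{Y}_t)$ has $(\mathbf v,\mathbf w)\notin\mathsf{W}$; $\mathsf A_n$ is the set of active positions of length $n$, $\mathsf A=\bigcup_n\mathsf A_n$. For $\mathbf v\in\mathsf P_k$, a decision tree of depth $n$ with starting position $\mathbf v$ is $\mathbf t=\{x_{\mathbf y}\in\mathcal{X}_{k+s+1}:\mathbf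 y\in\prod_{r=k+1}^{k+s}\mathcal{Y}_r,\ 0\le s<n\}$ ($\varnothing$ has depth 0); it is active if $(\mathbf v,x_\varnothing,y_{k+1},x_{y_{k+1}},\ldots,x_{y_{k+1},\ldots,y_{k+n-1}},y_{k+n})\in\mathsf A_{k+n}$ for all $(y_{k+1},\ldots,y_{k+n})$. $\mathsf T^{\mathsf A}_{\mathbf v}$: active trees with starting position $\mathbf v$; $\mathbf t'\prec_{\mathbf v}\mathbf t$ iff $\mathbf t$ is $\mathbf t'$ with its leaves removed. For a well-founded relation, rank: $\rho(\mathbf t)=0$ if minimal, else $\sup\{\rho(\mathbf t')+1:\mathbf t'\prec\mathbf t\}$. With symbols $-1<$ all ordinals $<\mathsf\Omega$: $\mathrm{val}(\mathbf v)=-1$ if $\mathbf v\notin\mathsf A$; $=\mathsf\Omega$ if $\mathbf v\in\mathsf A$ and $\prec_{\mathbf v}$ not well-founded; otherwise $=\rho_{\prec_{\mathbf v}}(\varnothing)$. Comparisons with $\mathsf\Omega$ and $-1$ use this extended order. *)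

theory Defs
  imports "HOL-Analysis.Analysis"
begin

definition Polish_space :: "'a topology \<Rightarrow> bool" where
  "Polish_space T \<longleftrightarrow> completely_metrizable_space T \<and> separable_space T"

definition baire_space :: "(nat \<Rightarrow> nat) topology" where
  "baire_space = product_topology (\<lambda>_. discrete_topology (UNIV :: nat set)) UNIV"

definition analytic_in :: "'a topology \<Rightarrow> 'a set \<Rightarrow> bool" where
  "analytic_in S A \<longleftrightarrow> A \<subseteq> topspace S \<and>
     (A = {} \<or> (\<exists>f. continuous_map baire_space S f \<and> f ` topspace baire_space = A))"

definition coanalytic_in :: "'a topology \<Rightarrow> 'a set \<Rightarrow> bool" where
  "coanalytic_in S A \<longleftrightarrow> A \<subseteq> topspace S \<and> analytic_in S (topspace S - A)"

text \<open>Rounds are numbered t = 1, 2, ...; X t and Y t are the move sets of round t.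
  A play is a function p :: nat => 'x * 'y where p i is the pair of moves of round i+1.
  A position of length n is a list of length n whose i-th entry is the moves of round i+1.\<close>

definition plays :: "(nat \<Rightarrow> 'x set) \<Rightarrow> (nat \<Rightarrow> 'y set) \<Rightarrow> (nat \<Rightarrow> 'x \<times> 'y) set" where
  "plays X Y = {p. \<forall>i. p i \<in> X (Suc i) \<times> Y (Suc i)}"

definition play_space :: "(nat \<Rightarrow> 'x topology) \<Rightarrow> (nat \<Rightarrow> 'y set) \<Rightarrow> (nat \<Rightarrow> 'x \<times> 'y) topology" where
  "play_space TX Y = product_topology (\<lambda>i. prod_topology (TX (Suc i)) (discrete_topology (Y (Suc i)))) UNIV"

definition positions :: "(nat \<Rightarrow> 'x set) \<Rightarrow> (nat \<Rightarrow> 'y set) \<Rightarrow> nat \<Rightarrow> ('x \<times> 'y) list set" where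
  "positions X Y n = {v. length v = n \<and> (\<forall>i<n. v ! i \<in> X (Suc i) \<times> Y (Suc i))}"

definition conts :: "(nat \<Rightarrow> 'x set) \<Rightarrow> (nat \<Rightarrow> 'y set) \<Rightarrow> nat \<Rightarrow> (nat \<Rightarrow> 'x \<times> 'y) set" where
  "conts X Y n = {w. \<forall>j. w j \<in> X (n + Suc j) \<times> Y (n + Suc j)}"

definition concat_play :: "('x \<times> 'y) list \<Rightarrow> (nat \<Rightarrow> 'x \<times> 'y) \<Rightarrow> nat \<Rightarrow> 'x \<times> 'y" where
  "concat_play v w = (\<lambda>i. if i < length v then v ! i else w (i - length v))"

definition finitely_decidable :: "(nat \<Rightarrow> 'x set) \<Rightarrow> (nat \<Rightarrow> 'y set) \<Rightarrow> (nat \<Rightarrow> 'x \<times> 'y) set \<Rightarrow> bool" where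
  "finitely_decidable X Y W \<longleftrightarrow>
     (\<forall>p\<in>W. \<exists>n. \<forall>q\<in>plays X Y. (\<forall>i<n. q i = p i) \<longrightarrow> q \<in> W)"

definition learner_strategy :: "(nat \<Rightarrow> 'x set) \<Rightarrow> (nat \<Rightarrow> 'y set) \<Rightarrow> (('x \<times> 'y) list \<Rightarrow> 'x \<Rightarrow> 'y) \<Rightarrow> bool" where
  "learner_strategy X Y \<sigma> \<longleftrightarrow>
     (\<forall>n. \<forall>h\<in>positions X Y n. \<forall>x\<in>X (Suc n). \<sigma> h x \<in> Y (Suc n))"

definition winning_learner_strategy ::
  "(nat \<Rightarrow> 'x set) \<Rightarrow> (nat \<Rightarrow> 'y set) \<Rightarrow> (nat \<Rightarrow> 'x \<times> 'y) set \<Rightarrow> (('x \<times> 'y) list \<Rightarrow> 'x \<Rightarrow> 'y) \<Rightarrow> bool" where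
  "winning_learner_strategy X Y W \<sigma> \<longleftrightarrow> learner_strategy X Y \<sigma> \<and>
     (\<forall>p\<in>plays X Y. (\<forall>i. snd (p i) = \<sigma> (map p [0..<i]) (fst (p i))) \<longrightarrow> p \<in> W)"

definition active :: "(nat \<Rightarrow> 'x set) \<Rightarrow> (nat \<Rightarrow> 'y set) \<Rightarrow> (nat \<Rightarrow> 'x \<times> 'y) set \<Rightarrow> ('x \<times> 'y) list \<Rightarrow> bool" where
  "active X Y W v \<longleftrightarrow> v \<in> positions X Y (length v) \<and>
     (\<exists>w\<in>conts X Y (length v). concat_play v w \<notin> W)"

text \<open>A decision tree is represented by the partial map ys |-> x_ys.\<close>
definition ysegs :: "(nat \<Rightarrow> 'y set) \<Rightarrow> nat \<Rightarrow> nat \<Rightarrow> 'y list set" where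
  "ysegs Y k s = {ys. length ys = s \<and> (\<forall>i<s. ys ! i \<in> Y (k + Suc i))}"

definition dectree :: "(nat \<Rightarrow> 'x set) \<Rightarrow> (nat \<Rightarrow> 'y set) \<Rightarrow> ('x \<times> 'y) list \<Rightarrow> nat \<Rightarrow> ('y list \<Rightarrow> 'x option) \<Rightarrow> bool" where
  "dectree X Y v n t \<longleftrightarrow> dom t = (\<Union>s<n. ysegs Y (length v) s) \<and>
     (\<forall>ys\<in>dom t. the (t ys) \<in> X (length v + Suc (length ys)))"

definition tree_path :: "('x \<times> 'y) list \<Rightarrow> ('y list \<Rightarrow> 'x option) \<Rightarrow> 'y list \<Rightarrow> ('x \<times> 'y) list" where
  "tree_path v t ys = v @ map (\<lambda>i. (the (t (take i ys)), ys ! i)) [0..<length ys]"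

definition active_tree :: "(nat \<Rightarrow> 'x set) \<Rightarrow> (nat \<Rightarrow> 'y set) \<Rightarrow> (nat \<Rightarrow> 'x \<times> 'y) set \<Rightarrow> ('x \<times> 'y) list \<Rightarrow> nat \<Rightarrow> ('y list \<Rightarrow> 'x option) \<Rightarrow> bool" where
  "active_tree X Y W v n t \<longleftrightarrow> dectree X Y v n t \<and>
     (\<forall>ys\<in>ysegs Y (length v) n. active X Y W (tree_path v t ys))"

definition active_trees :: "(nat \<Rightarrow> 'x set) \<Rightarrow> (nat \<Rightarrow> 'y set) \<Rightarrow> (nat \<Rightarrow> 'x \<times> 'y) set \<Rightarrow> ('x \<times> 'y) list \<Rightarrow> ('y list \<Rightarrow> 'x option) set" where
  "active_trees X Y W v = {t. \<exists>n. active_tree X Y W v n t}"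

definition tree_prec :: "(nat \<Rightarrow> 'x set) \<Rightarrow> (nat \<Rightarrow> 'y set) \<Rightarrow> (nat \<Rightarrow> 'x \<times> 'y) set \<Rightarrow> ('x \<times> 'y) list \<Rightarrow> ('y list \<Rightarrow> 'x option) \<Rightarrow> ('y list \<Rightarrow> 'x option) \<Rightarrow> bool" where
  "tree_prec X Y W v t' t \<longleftrightarrow> t' \<in> active_trees X Y W v \<and> t \<in> active_trees X Y W v \<and>
     (\<exists>n. dectree X Y v (Suc n) t' \<and> t = (\<lambda>ys. if length ys < n then t' ys else None))"

text \<open>An ordinal kappa is represented by an element of a well-ordered type; it denotes the order type
  of its initial segment. For a well-founded relation R (R a b meaning a precedes b) with rank
  rho(b) = sup {rho(a)+1 | R a b}, we have rho(b) >= kappa iff for all gamma < kappa there is a with R a b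
  and rho(a) >= gamma; rank_ge is the (by well-foundedness of < unique) solution of this recursion.\<close>
inductive rank_ge :: "('a \<Rightarrow> 'a \<Rightarrow> bool) \<Rightarrow> 'a \<Rightarrow> 'o::wellorder \<Rightarrow> bool" for R where
  "(\<And>\<gamma>. \<gamma> < \<kappa> \<Longrightarrow> \<exists>a. R a b \<and> rank_ge R a \<gamma>) \<Longrightarrow> rank_ge R b \<kappa>"

text \<open>rho(b) > kappa iff rho(a)+1 > kappa for some a with R a b, i.e. rho(a) >= kappa.\<close>
definition rank_gt :: "('a \<Rightarrow> 'a \<Rightarrow> bool) \<Rightarrow> 'a \<Rightarrow> 'o::wellorder \<Rightarrow> bool" where
  "rank_gt R b \<kappa> \<longleftrightarrow> (\<exists>a. R a b \<and> rank_ge R a \<kappa>)"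

text \<open>Comparisons of val(v) in {-1} + Ordinals + {Omega} with an ordinal kappa.\<close>
definition val_gt :: "(nat \<Rightarrow> 'x set) \<Rightarrow> (nat \<Rightarrow> 'y set) \<Rightarrow> (nat \<Rightarrow> 'x \<times> 'y) set \<Rightarrow> ('x \<times> 'y) list \<Rightarrow> 'o::wellorder \<Rightarrow> bool" where
  "val_gt X Y W v \<kappa> \<longleftrightarrow>
     (if \<not> active X Y W v then False
      else if \<not> wfP (tree_prec X Y W v) then True
      else rank_gt (tree_prec X Y W v) Map.empty \<kappa>)"

definition val_ge :: "(nat \<Rightarrow> 'x set) \<Rightarrow> (nat \<Rightarrow> 'y set) \<Rightarrow> (nat \<Rightarrow> 'x \<times> 'y) set \<Rightarrow> ('x \<times> 'y) list \<Rightarrow> 'o::wellorder \<Rightarrow> bool" where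
  "val_ge X Y W v \<kappa> \<longleftrightarrow>
     (if \<not> active X Y W v then False
      else if \<not> wfP (tree_prec X Y W v) then True
      else rank_ge (tree_prec X Y W v) Map.empty \<kappa>)"

end

theory Submission
  imports Defs
begin


definition okY :: "(nat \<Rightarrow> 'y set) \<Rightarrow> nat \<Rightarrow> 'y list \<Rightarrow> bool" where
  "okY Y k ys \<longleftrightarrow> (\<forall>i<length ys. ys!i \<in> Y (k + Suc i))"

lemma ysegs_ok: "ys \<in> ysegs Y k s \<longleftrightarrow> length ys = s \<and> okY Y k ys"
  by (auto simp: ysegs_def okY_def)

lemma okY_Nil[simp]: "okY Y k []" by (simp add: okY_def)

lemma okY_Cons[simp]: "okY Y k (y#ys) \<longleftrightarrow> y \<in> Y (Suc k) \<and> okY Y (Suc k) ys"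
  by (auto simp: okY_def less_Suc_eq_0_disj)

lemma okY_append: "okY Y k (ys@zs) \<longleftrightarrow> okY Y k ys \<and> okY Y (k + length ys) zs"
  by (induction ys arbitrary: k) auto

definition ext :: "(nat \<Rightarrow> 'y set) \<Rightarrow> nat \<Rightarrow> nat \<Rightarrow> 'y list" where
  "ext Y k m = map (\<lambda>i. SOME y. y \<in> Y (k + Suc i)) [0..<m]"

lemma ext_len[simp]: "length (ext Y k m) = m" by (simp add: ext_def)
lemma ext_ok: assumes "\<And>i. Y (k + Suc i) \<noteq> {}" shows "okY Y k (ext Y k m)"
  using assms by (auto simp: okY_def ext_def some_in_eq)

lemma dectree_iff: "dectree X Y v D t \<longleftrightarrow>
   (\<forall>ys. t ys \<noteq> None \<longleftrightarrow> length ys < D \<and> okY Y (length v) ys) \<and>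
   (\<forall>ys x. t ys = Some x \<longrightarrow> x \<in> X (length v + Suc (length ys)))"
  unfolding dectree_def by (auto simp: ysegs_ok set_eq_iff) (metis domI option.sel)

lemma active_tree_iff: "active_tree X Y W v D t \<longleftrightarrow> dectree X Y v D t \<and>
   (\<forall>ys. length ys = D \<and> okY Y (length v) ys \<longrightarrow> active X Y W (tree_path v t ys))"
  unfolding active_tree_def by (auto simp: ysegs_ok)

definition sub :: "('y list \<Rightarrow> 'x option) \<Rightarrow> 'y \<Rightarrow> 'y list \<Rightarrow> 'x option" where
  "sub t y = (\<lambda>ys. t (y#ys))"
definition restr :: "nat \<Rightarrow> ('y list \<Rightarrow> 'x option) \<Rightarrow> 'y list \<Rightarrow> 'x option" where
  "restr k t = (\<lambda>ys. if length ys < k then t ys else None)"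
definition graft :: "(nat \<Rightarrow> 'y set) \<Rightarrow> nat \<Rightarrow> 'x \<Rightarrow> ('y \<Rightarrow> 'y list \<Rightarrow> 'x option) \<Rightarrow> 'y list \<Rightarrow> 'x option" where
  "graft Y k x f = (\<lambda>ys. case ys of [] \<Rightarrow> Some x | y#ys' \<Rightarrow> if y \<in> Y (Suc k) then f y ys' else None)"

lemma tree_path_Cons: "tree_path v t (y#ys) = tree_path (v@[(the (t []), y)]) (sub t y) ys"
  unfolding tree_path_def sub_def by (simp del: upt_Suc add: map_upt_Suc)

lemma tree_path_Nil[simp]: "tree_path v t [] = v" by (simp add: tree_path_def)

lemma depth_unique: assumes "dectree X Y v D t" "dectree X Y v D' t" "\<And>i. Y (length v + Suc i) \<noteq> {}"
  shows "D = D'"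
proof (rule ccontr)
  assume "D \<noteq> D'"
  define m where "m = min D D'"
  have "okY Y (length v) (ext Y (length v) m)" "length (ext Y (length v) m) = m"
    using ext_ok[of Y "length v"] assms(3) by auto
  then show False using assms(1,2) \<open>D \<noteq> D'\<close> unfolding dectree_iff m_def
    by (metis min.strict_order_iff min_def nat_neq_iff)
qed

lemma dectree_sub: assumes "dectree X Y v (Suc d) t" "y \<in> Y (Suc (length v))"
  shows "dectree X Y (v@[p]) d (sub t y)"
  using assms unfolding dectree_iff sub_def
  apply (intro conjI allI impI)
  subgoal by auto
  subgoal for ys x
  proof -
    assume h: "(\<forall>ys. (t ys \<noteq> None) = (length ys < Suc d \<and> okY Y (length v) ys)) \<and>
      (\<forall>ys x. t ys = Some x \<longrightarrow> x \<in> X (length v + Suc (length ys)))" "t (y # ys) = Some x"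
    then have "x \<in> X (length v + Suc (length (y#ys)))" by blast
    then show ?thesis by simp
  qed
  done

lemma dectree_root: assumes "dectree X Y v (Suc d) t"
  shows "t [] \<noteq> None" "the (t []) \<in> X (Suc (length v))"
  proof -
  have a: "t [] \<noteq> None" using assms unfolding dectree_iff by auto
  then obtain x where "t [] = Some x" by auto
  moreover have "\<forall>ys x. t ys = Some x \<longrightarrow> x \<in> X (length v + Suc (length ys))"
    using assms unfolding dectree_iff by blast
  ultimately have "x \<in> X (length v + Suc 0)"
    by (metis list.size(3))
  then show "t [] \<noteq> None" "the (t []) \<in> X (Suc (length v))"
    using a \<open>t [] = Some x\<close> by auto
qed

lemma dectree_notY: assumes "dectree X Y v D t" "y \<notin> Y (Suc (length v))"
  shows "t (y#ys) = None"
  using assms unfolding dectree_iff by (meson not_None_eq okY_Cons)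

lemma dectree_graft: assumes "x \<in> X (Suc (length v))" "\<And>y. y \<in> Y (Suc (length v)) \<Longrightarrow> dectree X Y (v@[p y]) d (f y)"
  shows "dectree X Y v (Suc d) (graft Y (length v) x f)"
  unfolding dectree_iff
proof (intro conjI allI impI)
  fix ys show "(graft Y (length v) x f ys \<noteq> None) = (length ys < Suc d \<and> okY Y (length v) ys)"
    using assms(2) by (cases ys) (auto simp: graft_def dectree_iff)
next
  fix ys x' assume "graft Y (length v) x f ys = Some x'"
  then show "x' \<in> X (length v + Suc (length ys))"
    using assms by (cases ys) (auto simp: graft_def dectree_iff split: if_splits)
qed

lemma graft_simps[simp]: "graft Y k x f [] = Some x" "y \<in> Y (Suc k) \<Longrightarrow> sub (graft Y k x f) y = f y"
  by (auto simp: graft_def sub_def)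


lemma active_prefix: assumes "active X Y W p" "j \<le> length p" shows "active X Y W (take j p)"
proof -
  obtain w0 where w0: "w0 \<in> conts X Y (length p)" "concat_play p w0 \<notin> W"
    using assms(1) unfolding active_def by auto
  have pp: "p \<in> positions X Y (length p)" using assms(1) unfolding active_def by auto
  define w where "w = (\<lambda>i. concat_play p w0 (j + i))"
  have "w \<in> conts X Y j"
    unfolding conts_def
  proof
    show "\<forall>i. w i \<in> X (j + Suc i) \<times> Y (j + Suc i)"
    proof
      fix i show "w i \<in> X (j + Suc i) \<times> Y (j + Suc i)"
      proof (cases "j + i < length p")
        case True then show ?thesis using pp unfolding w_def concat_play_def positions_def by auto
      next
        case False
        then have "w0 (j + i - length p) \<in> X (length p + Suc (j + i - length p)) \<times> Y (length p + Suc (j + i - length p))"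
          using w0(1) unfolding conts_def by blast
        moreover have "length p + Suc (j + i - length p) = j + Suc i" using False by auto
        ultimately show ?thesis using False unfolding w_def concat_play_def by auto
      qed
    qed
  qed
  moreover have "concat_play (take j p) w = concat_play p w0"
    using assms(2) by (auto simp: concat_play_def w_def min_def)
  moreover have "take j p \<in> positions X Y (length (take j p))"
    using pp assms(2) by (auto simp: positions_def min_def)
  moreover have lj: "length (take j p) = j" using assms(2) by simp
  ultimately show ?thesis using w0(2) unfolding active_def lj
    by (intro conjI bexI[of _ w]) (simp_all only: not_False_eq_True)
qed

lemma tree_path_length[simp]: "length (tree_path v t ys) = length v + length ys"
  by (simp add: tree_path_def)

lemma tree_path_restr: assumes "length ys = k"
  shows "tree_path v (restr k t) ys = take (length v + k) (tree_path v t (ys @ zs))"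
proof -
  have "take k (map (\<lambda>i. (the (t (take i (ys @ zs))), (ys @ zs) ! i)) [0..<length (ys@zs)])
     = map (\<lambda>i. (the (t (take i (ys @ zs))), (ys @ zs) ! i)) [0..<k]"
    using assms by (simp add: take_map upt_add_eq_append[of 0 k] del: upt_add_eq_append)
  also have "\<dots> = map (\<lambda>i. (the (restr k t (take i ys)), ys ! i)) [0..<length ys]"
    using assms by (auto simp: restr_def nth_append)
  finally show ?thesis unfolding tree_path_def using assms by simp
qed

lemma restr_id: "dectree X Y v D t \<Longrightarrow> restr D t = t"
proof
  fix ys assume "dectree X Y v D t"
  then have "\<not> length ys < D \<Longrightarrow> t ys = None" unfolding dectree_iff by blast
  then show "restr D t ys = t ys" unfolding restr_def by auto
qed

lemma active_tree_restr: assumes "active_tree X Y W v D t" "k \<le> D" "\<And>i. Y (length v + Suc i) \<noteq> {}"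
  shows "active_tree X Y W v k (restr k t)"
  unfolding active_tree_iff
proof (intro conjI allI impI)
  have d: "dectree X Y v D t" using assms(1) unfolding active_tree_iff by blast
  show "dectree X Y v k (restr k t)"
    unfolding dectree_iff
  proof (intro conjI allI impI)
    fix ys show "(restr k t ys \<noteq> None) = (length ys < k \<and> okY Y (length v) ys)"
      using d assms(2) unfolding dectree_iff restr_def by auto
  next
    fix ys x assume "restr k t ys = Some x"
    then have "t ys = Some x" unfolding restr_def by (auto split: if_splits)
    then show "x \<in> X (length v + Suc (length ys))" using d unfolding dectree_iff by blast
  qed
next
  fix ys assume ys: "length ys = k \<and> okY Y (length v) ys"
  define zs where "zs = ext Y (length v + k) (D - k)"
  have "okY Y (length v + k) zs" unfolding zs_def
  proof (rule ext_ok)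
    fix i have "Y (length v + Suc (k + i)) \<noteq> {}" by (rule assms(3))
    then show "Y (length v + k + Suc i) \<noteq> {}" by (simp add: add.assoc)
  qed
  then have "okY Y (length v) (ys @ zs)" "length (ys @ zs) = D"
    using ys assms(2) by (auto simp: okY_append zs_def)
  then have "active X Y W (tree_path v t (ys @ zs))" using assms(1) unfolding active_tree_iff by blast
  then have "active X Y W (take (length v + k) (tree_path v t (ys @ zs)))"
    by (rule active_prefix) (use assms(2) \<open>length (ys @ zs) = D\<close> in simp)
  then show "active X Y W (tree_path v (restr k t) ys)"
    using tree_path_restr ys by metis
qed

lemma restr_restr: "k \<le> m \<Longrightarrow> restr k (restr m t) = restr k t"
  by (auto simp: restr_def intro!: ext)

lemma restr_0: "restr 0 t = Map.empty" by (simp add: restr_def)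

lemma prec_char: assumes ne: "\<And>i. Y (length v + Suc i) \<noteq> {}" and t: "active_tree X Y W v D t"
  shows "tree_prec X Y W v a t \<longleftrightarrow> active_tree X Y W v (Suc D) a \<and> t = restr D a"
proof
  assume "tree_prec X Y W v a t"
  then obtain m n where m: "active_tree X Y W v m a" and n: "dectree X Y v (Suc n) a" and tr: "t = restr n a"
    unfolding tree_prec_def active_trees_def restr_def by blast
  have "m = Suc n" using depth_unique[of X Y v m a "Suc n"] ne n m unfolding active_tree_def by blast
  have "active_tree X Y W v n t" using active_tree_restr[OF m _ ne, of n] \<open>m = Suc n\<close> tr by simp
  then have "n = D" using depth_unique[of X Y v n t D] ne t unfolding active_tree_def by blast
  then show "active_tree X Y W v (Suc D) a \<and> t = restr D a" using m \<open>m = Suc n\<close> tr by simp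
next
  assume "active_tree X Y W v (Suc D) a \<and> t = restr D a"
  then show "tree_prec X Y W v a t" using t unfolding tree_prec_def active_trees_def restr_def active_tree_def
    by blast
qed

lemma active_tree_sub: assumes "active_tree X Y W v (Suc d) t" "y \<in> Y (Suc (length v))"
  shows "active_tree X Y W (v@[(the (t []), y)]) d (sub t y)"
  using assms unfolding active_tree_iff
  by (auto simp: dectree_sub tree_path_Cons[symmetric])

lemma active_tree_graft: assumes "x \<in> X (Suc (length v))"
  "\<And>y. y \<in> Y (Suc (length v)) \<Longrightarrow> active_tree X Y W (v@[(x,y)]) d (f y)"
  shows "active_tree X Y W v (Suc d) (graft Y (length v) x f)"
  unfolding active_tree_iff
proof (intro conjI allI impI)
  show "dectree X Y v (Suc d) (graft Y (length v) x f)"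
    using assms by (intro dectree_graft) (auto simp: active_tree_def)
next
  fix ys assume ys: "length ys = Suc d \<and> okY Y (length v) ys"
  then obtain y ys' where "ys = y#ys'" by (cases ys) auto
  then show "active X Y W (tree_path v (graft Y (length v) x f) ys)"
    using ys assms(2)[of y] unfolding active_tree_iff by (auto simp: tree_path_Cons)
qed

lemma sub_restr: "sub (restr (Suc d) t) y = restr d (sub t y)"
  by (auto simp: sub_def restr_def intro!: ext)


lemma rank_ge_iff: "rank_ge R b \<kappa> \<longleftrightarrow> (\<forall>\<gamma><\<kappa>. \<exists>a. R a b \<and> rank_ge R a \<gamma>)"
  by (subst rank_ge.simps) simp

lemma rank_closed: assumes "\<forall>z\<in>Q. \<exists>y\<in>Q. R y z" shows "z \<in> Q \<Longrightarrow> rank_ge R z \<kappa>"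
proof (induction \<kappa> arbitrary: z rule: less_induct)
  case (less \<kappa>)
  show ?case
  proof (subst rank_ge_iff, intro allI impI)
    fix \<gamma> assume "\<gamma> < \<kappa>"
    obtain y where "y \<in> Q" "R y z" using assms less.prems by blast
    then show "\<exists>a. R a z \<and> rank_ge R a \<gamma>" using less.IH[OF \<open>\<gamma> < \<kappa>\<close>] by blast
  qed
qed

lemma active_ne: assumes "active X Y W v" shows "\<And>i. Y (length v + Suc i) \<noteq> {}"
proof -
  fix i
  obtain w where "w \<in> conts X Y (length v)" using assms unfolding active_def by blast
  then have "w i \<in> X (length v + Suc i) \<times> Y (length v + Suc i)" unfolding conts_def by blast
  then show "Y (length v + Suc i) \<noteq> {}" by auto
qed

lemma empty_tree: assumes "active X Y W v" shows "active_tree X Y W v 0 Map.empty"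
  using assms unfolding active_tree_iff dectree_iff by auto

lemma nonwf_closed:
  assumes act: "active X Y W v" and nwf: "\<not> wfP (tree_prec X Y W v)"
  obtains Q where "Map.empty \<in> Q" "\<forall>z\<in>Q. \<exists>y\<in>Q. tree_prec X Y W v y z"
proof -
  let ?R = "tree_prec X Y W v"
  note ne = active_ne[OF act]
  obtain Q x where Q: "x \<in> Q" "\<forall>z\<in>Q. \<exists>y. ?R y z \<and> y \<in> Q"
    using nwf unfolding wfp_eq_minimal by blast
  define Q' where "Q' = {restr k z | z k d. z \<in> Q \<and> active_tree X Y W v d z \<and> k \<le> d}"
  have inQ: "z \<in> Q \<Longrightarrow> \<exists>d. active_tree X Y W v d z" for z
    using Q(2) unfolding tree_prec_def active_trees_def by blast
  have cl: "\<forall>z\<in>Q'. \<exists>y\<in>Q'. ?R y z"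
  proof
    fix t assume "t \<in> Q'"
    then obtain z k d where z: "t = restr k z" "z \<in> Q" "active_tree X Y W v d z" "k \<le> d"
      unfolding Q'_def by blast
    show "\<exists>y\<in>Q'. ?R y t"
    proof (cases "k < d")
      case True
      have "\<exists>z' k' d'. restr (Suc k) z = restr k' z' \<and> z' \<in> Q \<and> active_tree X Y W v d' z' \<and> k' \<le> d'"
        using z(2,3) True Suc_leI by blast
      then have "restr (Suc k) z \<in> Q'" unfolding Q'_def by blast
      moreover have "?R (restr (Suc k) z) t"
      proof -
        have a1: "active_tree X Y W v k t" using active_tree_restr[OF z(3) z(4) ne] z(1) by simp
        have a2: "active_tree X Y W v (Suc k) (restr (Suc k) z)"
          using active_tree_restr[OF z(3) _ ne, of "Suc k"] True by simp
        have "t = restr k (restr (Suc k) z)" using z(1) restr_restr[of k "Suc k" z] by simp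
        then show ?thesis using prec_char[OF ne a1] a2 by blast
      qed
      ultimately show ?thesis by blast
    next
      case False
      then have "k = d" using z(4) by simp
      moreover have "dectree X Y v d z" using z(3) unfolding active_tree_def by blast
      ultimately have "t = z" using z(1) restr_id by metis
      then obtain y where y: "?R y z" "y \<in> Q" using Q(2) z(2) by blast
      then obtain d' where d': "active_tree X Y W v d' y" using inQ by blast
      then have "y = restr d' y" using restr_id unfolding active_tree_def by metis
      then have "y \<in> Q'" unfolding Q'_def using y(2) d' by blast
      then show ?thesis using y \<open>t = z\<close> by blast
    qed
  qed
  moreover have em: "Map.empty \<in> Q'"
  proof -
    obtain d where "active_tree X Y W v d x" using inQ Q(1) by blast
    then have "\<exists>z' k' d'. Map.empty = restr k' z' \<and> z' \<in> Q \<and> active_tree X Y W v d' z' \<and> k' \<le> d'"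
      using Q(1) restr_0[of x] by (metis le0)
    then show ?thesis unfolding Q'_def by blast
  qed
  show ?thesis by (rule that[OF em cl])
qed

lemma val_ge_iff: "val_ge X Y W v \<kappa> \<longleftrightarrow> active X Y W v \<and> rank_ge (tree_prec X Y W v) Map.empty \<kappa>"
proof (cases "active X Y W v \<and> \<not> wfP (tree_prec X Y W v)")
  case True
  then obtain Q where Q: "Map.empty \<in> Q" "\<forall>z\<in>Q. \<exists>y\<in>Q. tree_prec X Y W v y z"
    using nonwf_closed[of X Y W v] True by blast
  have "rank_ge (tree_prec X Y W v) Map.empty \<kappa>" by (rule rank_closed[OF Q(2) Q(1)])
  then show ?thesis using True unfolding val_ge_def by (simp only: if_False if_True not_not simp_thms)
next
  case False then show ?thesis unfolding val_ge_def by (cases "active X Y W v") (simp_all only: if_False if_True not_not simp_thms)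
qed

lemma val_gt_iff: "val_gt X Y W v \<kappa> \<longleftrightarrow> active X Y W v \<and> rank_gt (tree_prec X Y W v) Map.empty \<kappa>"
proof (cases "active X Y W v \<and> \<not> wfP (tree_prec X Y W v)")
  case True
  then obtain Q where Q: "Map.empty \<in> Q" "\<forall>z\<in>Q. \<exists>y\<in>Q. tree_prec X Y W v y z"
    using nonwf_closed[of X Y W v] True by blast
  then obtain y where "y \<in> Q" "tree_prec X Y W v y Map.empty" by blast
  moreover have "rank_ge (tree_prec X Y W v) y \<kappa>" by (rule rank_closed[OF Q(2) \<open>y \<in> Q\<close>])
  ultimately have "rank_gt (tree_prec X Y W v) Map.empty \<kappa>" unfolding rank_gt_def by blast
  then show ?thesis using True unfolding val_gt_def by (simp only: if_False if_True not_not simp_thms)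
next
  case False then show ?thesis unfolding val_gt_def by (cases "active X Y W v") (simp_all only: if_False if_True not_not simp_thms)
qed


lemma ne_snoc: assumes "\<And>i. Y (length v + Suc i) \<noteq> {}" shows "\<And>i. Y (length (v@[p]) + Suc i) \<noteq> {}"
proof -
  fix i have "Y (length v + Suc (Suc i)) \<noteq> {}" by (rule assms)
  then show "Y (length (v@[p]) + Suc i) \<noteq> {}" by simp
qed

lemma rank_split:
  assumes ne: "\<And>i. Y (length v + Suc i) \<noteq> {}"
  shows "active_tree X Y W v (Suc d) t \<Longrightarrow>
    rank_ge (tree_prec X Y W v) t \<kappa> \<longleftrightarrow>
    (\<forall>y\<in>Y (Suc (length v)). rank_ge (tree_prec X Y W (v@[(the (t []), y)])) (sub t y) \<kappa>)"
proof (induction \<kappa> arbitrary: t d rule: less_induct)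
  case (less \<kappa>)
  note t = less.prems
  define x where "x = the (t [])"
  have dt: "dectree X Y v (Suc d) t" using t unfolding active_tree_def by blast
  have tx: "t [] = Some x" using dectree_root[OF dt] unfolding x_def by auto
  have xX: "x \<in> X (Suc (length v))" using dectree_root[OF dt] unfolding x_def by auto
  show ?case
  proof
    assume rk: "rank_ge (tree_prec X Y W v) t \<kappa>"
    show "\<forall>y\<in>Y (Suc (length v)). rank_ge (tree_prec X Y W (v@[(the (t []), y)])) (sub t y) \<kappa>"
    proof (intro ballI)
      fix y assume y: "y \<in> Y (Suc (length v))"
      show "rank_ge (tree_prec X Y W (v@[(the (t []), y)])) (sub t y) \<kappa>"
      proof (subst rank_ge_iff, intro allI impI)
        fix \<gamma> assume g: "\<gamma> < \<kappa>"
        obtain a where a: "tree_prec X Y W v a t" "rank_ge (tree_prec X Y W v) a \<gamma>"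
          using rk g rank_ge_iff by metis
        have aa: "active_tree X Y W v (Suc (Suc d)) a" and ta: "t = restr (Suc d) a"
          using prec_char[OF ne t] a(1) by auto
        have ax: "the (a []) = the (t [])" using ta by (simp add: restr_def)
        have IH: "rank_ge (tree_prec X Y W (v@[(the (a []), y)])) (sub a y) \<gamma>"
          using less.IH[OF g aa] a(2) y by blast
        have st: "active_tree X Y W (v@[(the (t []), y)]) d (sub t y)"
          by (rule active_tree_sub[OF t y])
        have sa: "active_tree X Y W (v@[(the (t []), y)]) (Suc d) (sub a y)"
          using active_tree_sub[OF aa y] ax by simp
        have "sub t y = restr d (sub a y)" using ta sub_restr by metis
        then have "tree_prec X Y W (v@[(the (t []), y)]) (sub a y) (sub t y)"
          using prec_char[OF ne_snoc[of Y v, OF ne] st] sa by blast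
        then show "\<exists>b. tree_prec X Y W (v@[(the (t []), y)]) b (sub t y) \<and>
            rank_ge (tree_prec X Y W (v@[(the (t []), y)])) b \<gamma>"
          using IH ax by auto
      qed
    qed
  next
    assume H: "\<forall>y\<in>Y (Suc (length v)). rank_ge (tree_prec X Y W (v@[(the (t []), y)])) (sub t y) \<kappa>"
    show "rank_ge (tree_prec X Y W v) t \<kappa>"
    proof (subst rank_ge_iff, intro allI impI)
      fix \<gamma> assume g: "\<gamma> < \<kappa>"
      have "\<forall>y\<in>Y (Suc (length v)). \<exists>b. tree_prec X Y W (v@[(x, y)]) b (sub t y) \<and>
            rank_ge (tree_prec X Y W (v@[(x, y)])) b \<gamma>"
        using H g rank_ge_iff x_def by metis
      then obtain f where f: "\<And>y. y \<in> Y (Suc (length v)) \<Longrightarrow> tree_prec X Y W (v@[(x, y)]) (f y) (sub t y) \<and>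
            rank_ge (tree_prec X Y W (v@[(x, y)])) (f y) \<gamma>"
        by metis
      have fy: "active_tree X Y W (v@[(x, y)]) (Suc d) (f y) \<and> sub t y = restr d (f y)"
        if y: "y \<in> Y (Suc (length v))" for y
      proof -
        have st: "active_tree X Y W (v@[(x, y)]) d (sub t y)"
          using active_tree_sub[OF t y] x_def by simp
        show ?thesis using prec_char[OF ne_snoc[of Y v, OF ne] st] f[OF y] by blast
      qed
      define a where "a = graft Y (length v) x f"
      have aa: "active_tree X Y W v (Suc (Suc d)) a"
        unfolding a_def by (rule active_tree_graft[of x X v, OF xX]) (use fy in blast)
      have ta: "t = restr (Suc d) a"
      proof
        fix ys show "t ys = restr (Suc d) a ys"
        proof (cases ys)
          case Nil then show ?thesis using tx by (simp add: restr_def a_def)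
        next
          case (Cons y ys')
          show ?thesis
          proof (cases "y \<in> Y (Suc (length v))")
            case True
            have "t ys = restr d (f y) ys'" using fy[OF True] Cons by (metis sub_def)
            then show ?thesis using Cons True by (simp add: restr_def a_def graft_def)
          next
            case False
            then show ?thesis using Cons dectree_notY[OF dt False] by (simp add: restr_def a_def graft_def)
          qed
        qed
      qed
      have "tree_prec X Y W v a t" using prec_char[OF ne t] aa ta by blast
      moreover have "rank_ge (tree_prec X Y W v) a \<gamma>"
      proof -
        have "\<forall>y\<in>Y (Suc (length v)). rank_ge (tree_prec X Y W (v@[(the (a []), y)])) (sub a y) \<gamma>"
          using f unfolding a_def by simp
        then show ?thesis using less.IH[OF g aa] by blast
      qed
      ultimately show "\<exists>a. tree_prec X Y W v a t \<and> rank_ge (tree_prec X Y W v) a \<gamma>" by blast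
    qed
  qed
qed


lemma main_generic:
  assumes v: "v \<in> positions X Y n" and strat: "learner_strategy X Y \<sigma>"
  shows "val_gt X Y W v \<kappa> \<longleftrightarrow> (\<exists>x\<in>X (Suc n). \<forall>y\<in>Y (Suc n). val_ge X Y W (v@[(x,y)]) \<kappa>)"
proof (cases "active X Y W v")
  case False
  have "\<not> (\<exists>x\<in>X (Suc n). \<forall>y\<in>Y (Suc n). val_ge X Y W (v@[(x,y)]) \<kappa>)"
  proof
    assume "\<exists>x\<in>X (Suc n). \<forall>y\<in>Y (Suc n). val_ge X Y W (v@[(x,y)]) \<kappa>"
    then obtain x where x: "x \<in> X (Suc n)" "\<forall>y\<in>Y (Suc n). val_ge X Y W (v@[(x,y)]) \<kappa>" by blast
    have "\<sigma> v x \<in> Y (Suc n)" using strat v x(1) unfolding learner_strategy_def by blast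
    then have "active X Y W (v@[(x, \<sigma> v x)])" using x(2) val_ge_iff by blast
    then have "active X Y W (take (length v) (v@[(x, \<sigma> v x)]))" by (rule active_prefix) simp
    then show False using False by simp
  qed
  then show ?thesis using False val_gt_iff by blast
next
  case True
  note ne = active_ne[OF True]
  have ln: "length v = n" using v unfolding positions_def by blast
  have e0: "active_tree X Y W v 0 Map.empty" by (rule empty_tree[OF True])
  have "val_gt X Y W v \<kappa> \<longleftrightarrow> (\<exists>a. tree_prec X Y W v a Map.empty \<and> rank_ge (tree_prec X Y W v) a \<kappa>)"
    using True val_gt_iff rank_gt_def by metis
  also have "\<dots> \<longleftrightarrow> (\<exists>a. active_tree X Y W v (Suc 0) a \<and> rank_ge (tree_prec X Y W v) a \<kappa>)"
    by (simp add: prec_char[OF ne e0] restr_0)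
  also have "\<dots> \<longleftrightarrow> (\<exists>x\<in>X (Suc n). \<forall>y\<in>Y (Suc n). val_ge X Y W (v@[(x,y)]) \<kappa>)"
  proof
    assume "\<exists>a. active_tree X Y W v (Suc 0) a \<and> rank_ge (tree_prec X Y W v) a \<kappa>"
    then obtain a where a: "active_tree X Y W v (Suc 0) a" "rank_ge (tree_prec X Y W v) a \<kappa>" by blast
    have dt: "dectree X Y v (Suc 0) a" using a(1) unfolding active_tree_def by blast
    have rs: "\<forall>y\<in>Y (Suc (length v)). rank_ge (tree_prec X Y W (v@[(the (a []), y)])) (sub a y) \<kappa>"
      using rank_split[OF ne a(1)] a(2) by blast
    show "\<exists>x\<in>X (Suc n). \<forall>y\<in>Y (Suc n). val_ge X Y W (v@[(x,y)]) \<kappa>"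
    proof (intro bexI ballI)
      show "the (a []) \<in> X (Suc n)" using dectree_root[OF dt] ln by simp
    next
      fix y assume y: "y \<in> Y (Suc n)"
      have st: "active_tree X Y W (v@[(the (a []), y)]) 0 (sub a y)"
        using active_tree_sub[OF a(1)] y ln by simp
      then have act: "active X Y W (v@[(the (a []), y)])"
        unfolding active_tree_iff by (metis list.size(3) okY_Nil tree_path_Nil)
      have "sub a y = Map.empty"
      proof
        fix ys show "sub a y ys = None"
          using st unfolding active_tree_iff dectree_iff by blast
      qed
      then show "val_ge X Y W (v@[(the (a []), y)]) \<kappa>"
        using rs y ln act val_ge_iff by metis
    qed
  next
    assume "\<exists>x\<in>X (Suc n). \<forall>y\<in>Y (Suc n). val_ge X Y W (v@[(x,y)]) \<kappa>"
    then obtain x where x: "x \<in> X (Suc n)" "\<forall>y\<in>Y (Suc n). val_ge X Y W (v@[(x,y)]) \<kappa>" by blast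
    define a where "a = graft Y (length v) x (\<lambda>_. Map.empty)"
    have aa: "active_tree X Y W v (Suc 0) a"
      unfolding a_def
    proof (rule active_tree_graft[of x X v])
      show "x \<in> X (Suc (length v))" using x(1) ln by simp
    next
      fix y assume "y \<in> Y (Suc (length v))"
      then have "active X Y W (v@[(x,y)])" using x(2) ln val_ge_iff by metis
      then show "active_tree X Y W (v@[(x,y)]) 0 Map.empty" by (rule empty_tree)
    qed
    have "rank_ge (tree_prec X Y W v) a \<kappa>"
    proof -
      have "\<forall>y\<in>Y (Suc (length v)). rank_ge (tree_prec X Y W (v@[(the (a []), y)])) (sub a y) \<kappa>"
        using x(2) ln unfolding a_def by (simp add: val_ge_iff)
      then show ?thesis using rank_split[OF ne aa] by blast
    qed
    then show "\<exists>a. active_tree X Y W v (Suc 0) a \<and> rank_ge (tree_prec X Y W v) a \<kappa>" using aa by blast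
  qed
  finally show ?thesis .
qed


theorem mainTheorem17:
  fixes TX :: "nat \<Rightarrow> 'x topology" and Y :: "nat \<Rightarrow> 'y set"
    and W :: "(nat \<Rightarrow> 'x \<times> 'y) set"
    and n :: nat and v :: "('x \<times> 'y) list" and \<kappa> :: "'o::wellorder"
  assumes polish: "\<And>t. t \<ge> 1 \<Longrightarrow> Polish_space (TX t)"
    and countY: "\<And>t. t \<ge> 1 \<Longrightarrow> countable (Y t)"
    and coan: "coanalytic_in (play_space TX Y) W"
    and findec: "finitely_decidable (\<lambda>t. topspace (TX t)) Y W"
    and win: "\<exists>\<sigma>. winning_learner_strategy (\<lambda>t. topspace (TX t)) Y W \<sigma>"
    and v: "v \<in> positions (\<lambda>t. topspace (TX t)) Y n"
  shows "val_gt (\<lambda>t. topspace (TX t)) Y W v \<kappa> \<longleftrightarrow>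
    (\<exists>x\<in>topspace (TX (Suc n)). \<forall>y\<in>Y (Suc n).
        val_ge (\<lambda>t. topspace (TX t)) Y W (v @ [(x, y)]) \<kappa>)"
proof -
  obtain \<sigma> where "winning_learner_strategy (\<lambda>t. topspace (TX t)) Y W \<sigma>" using win by blast
  then have "learner_strategy (\<lambda>t. topspace (TX t)) Y \<sigma>" unfolding winning_learner_strategy_def by blast
  then show ?thesis by (rule main_generic[OF v])
qed

end
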